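(* Let $X$ be a scattered topological space such that $\mathrm{Homeo}(X)$ is fully transitive, and assume each similarity class of $X$ is infinite. Then every closed normal subgroup of $\mathrm{Homeo}(X)$ is of the form $\mathrm{Fix}(A)$, where $A$ is a union of similarity classes (possibly empty).
   Context: A topological space (not assumed Hausdorff) is scattered if every nonempty subset has a point isolated in that subset. For scattered $X$, $\mathrm{Homeo}(X)$ carries the topology of pointwise convergence on $X$. Two points $x,y\in X$ are similar if there are neighbourhoods $U_x\ni x$, $U_y\ni y$ and a homeomorphism $h\colon U_x\to U_y$ with $h(x)=y$; the equivalence classes are similarity classes. $\mathrm{Homeo}(X)$ is fully transitive if for every $k$ and all $k$-tuples of pairwise distinct points $(x_1,\dots,x_k)$, $(y_1,\dots,y_k)$ with $x_i$ similar to $y_i$, some homeomorphism $g$ satisfies $g(x_i)=y_i$ for all $i$. For $A\subseteq X$, $\mathrm{Fix}(A)$ is the subgroup of homeomorphisms fixing every point of $A$ ($\mathrm{Fix}(\emptyset)=\mathrm{Homeo}(X)$). *)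

theory Defs
  imports "HOL-Analysis.Analysis" "HOL-Algebra.Coset"
begin

definition scattered_space :: "'a topology \<Rightarrow> bool" where
  "scattered_space X \<longleftrightarrow>
     (\<forall>S. S \<subseteq> topspace X \<and> S \<noteq> {} \<longrightarrow>
        (\<exists>x\<in>S. \<exists>U. openin X U \<and> U \<inter> S = {x}))"

definition homeos :: "'a topology \<Rightarrow> ('a \<Rightarrow> 'a) set" where
  "homeos X = {h. homeomorphic_map X X h \<and> (\<forall>x. x \<notin> topspace X \<longrightarrow> h x = x)}"

definition homeo_group :: "'a topology \<Rightarrow> ('a \<Rightarrow> 'a) monoid" where
  "homeo_group X = \<lparr>carrier = homeos X, mult = (\<lambda>g h. g \<circ> h), one = id\<rparr>"

definition pointwise_top :: "'a topology \<Rightarrow> ('a \<Rightarrow> 'a) topology" where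
  "pointwise_top X =
     subtopology (product_topology (\<lambda>_. X) (topspace X))
                 ((\<lambda>h. restrict h (topspace X)) ` homeos X)"

definition closed_in_homeo :: "'a topology \<Rightarrow> ('a \<Rightarrow> 'a) set \<Rightarrow> bool" where
  "closed_in_homeo X G \<longleftrightarrow> G \<subseteq> homeos X \<and>
     closedin (pointwise_top X) ((\<lambda>h. restrict h (topspace X)) ` G)"

definition similar :: "'a topology \<Rightarrow> 'a \<Rightarrow> 'a \<Rightarrow> bool" where
  "similar X x y \<longleftrightarrow> x \<in> topspace X \<and> y \<in> topspace X \<and>
     (\<exists>U V h. openin X U \<and> openin X V \<and> x \<in> U \<and> y \<in> V \<and>
        homeomorphic_map (subtopology X U) (subtopology X V) h \<and> h x = y)"

definition fully_transitive :: "'a topology \<Rightarrow> bool" where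
  "fully_transitive X \<longleftrightarrow>
     (\<forall>xs ys. length xs = length ys \<and> distinct xs \<and> distinct ys \<and>
        (\<forall>i<length xs. similar X (xs ! i) (ys ! i)) \<longrightarrow>
        (\<exists>g\<in>homeos X. \<forall>i<length xs. g (xs ! i) = ys ! i))"

definition Fix :: "'a topology \<Rightarrow> 'a set \<Rightarrow> ('a \<Rightarrow> 'a) set" where
  "Fix X A = {g \<in> homeos X. \<forall>a\<in>A. g a = a}"

end

theory Submission
  imports Defs
begin

lemma homeos_topspace: "h \<in> homeos X \<Longrightarrow> x \<in> topspace X \<Longrightarrow> h x \<in> topspace X"
  unfolding homeos_def using homeomorphic_imp_surjective_map by blast

lemma homeos_comp: "g \<in> homeos X \<Longrightarrow> h \<in> homeos X \<Longrightarrow> g \<circ> h \<in> homeos X"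
  unfolding homeos_def by (auto intro: homeomorphic_map_compose)

lemma homeos_id: "id \<in> homeos X"
  unfolding homeos_def by simp

lemma homeos_inv_ex: assumes "h \<in> homeos X"
  shows "\<exists>g\<in>homeos X. g \<circ> h = id \<and> h \<circ> g = id"
proof -
  have hm: "homeomorphic_map X X h" and out: "\<And>x. x \<notin> topspace X \<Longrightarrow> h x = x"
    using assms unfolding homeos_def by auto
  obtain g0 where g0: "homeomorphic_maps X X h g0" using hm homeomorphic_map_maps by blast
  define g where "g = (\<lambda>y. if y \<in> topspace X then g0 y else y)"
  have hts: "h ` topspace X \<subseteq> topspace X" using hm homeomorphic_imp_surjective_map by blast
  have "homeomorphic_maps X X h g"
    using g0 hts unfolding homeomorphic_maps_def g_def
    by (auto elim: continuous_map_eq)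
  then have hg: "homeomorphic_map X X g" "\<forall>x \<in> topspace X. g(h x) = x" "\<forall>y \<in> topspace X. h(g y) = y"
    by (auto simp: homeomorphic_maps_map)
  have "g \<in> homeos X" using hg(1) unfolding homeos_def g_def by auto
  moreover have "g \<circ> h = id"
  proof
    fix x show "(g \<circ> h) x = id x"
      using hg(2) out hts by (cases "x \<in> topspace X") (auto simp: g_def)
  qed
  moreover have "h \<circ> g = id"
    using hg out hts by (auto simp: g_def fun_eq_iff)
  ultimately show ?thesis by blast
qed

lemma homeo_group: "group (homeo_group X)"
  apply (rule groupI)
  using homeos_comp homeos_id 
     apply (auto simp: homeo_group_def comp_assoc)
  using homeos_inv_ex by blast

lemma invG:
  assumes "h \<in> homeos X"
  shows "(inv\<^bsub>homeo_group X\<^esub> h) \<in> homeos X"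
    "\<And>x. (inv\<^bsub>homeo_group X\<^esub> h) (h x) = x"
    "\<And>x. h ((inv\<^bsub>homeo_group X\<^esub> h) x) = x"
proof -
  interpret group "homeo_group X" by (rule homeo_group)
  have c: "h \<in> carrier (homeo_group X)" using assms by (simp add: homeo_group_def)
  show "(inv\<^bsub>homeo_group X\<^esub> h) \<in> homeos X" using inv_closed[OF c] by (simp add: homeo_group_def)
  show "\<And>x. (inv\<^bsub>homeo_group X\<^esub> h) (h x) = x"
    using l_inv[OF c] by (simp add: homeo_group_def fun_eq_iff)
  show "\<And>x. h ((inv\<^bsub>homeo_group X\<^esub> h) x) = x"
    using r_inv[OF c] by (simp add: homeo_group_def fun_eq_iff)
qed

lemma invG_fix: "h \<in> homeos X \<Longrightarrow> h y = y \<Longrightarrow> (inv\<^bsub>homeo_group X\<^esub> h) y = y"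
  by (metis invG(2))

lemma homeos_inj: "h \<in> homeos X \<Longrightarrow> h x = h y \<Longrightarrow> x = y"
  by (metis invG(2))

lemma similar_refl: "x \<in> topspace X \<Longrightarrow> similar X x x"
  unfolding similar_def
  by (rule conjI, simp, rule conjI, simp, rule exI[of _ "topspace X"], rule exI[of _ "topspace X"], rule exI[of _ id]) simp

lemma similar_homeo: "g \<in> homeos X \<Longrightarrow> x \<in> topspace X \<Longrightarrow> similar X x (g x)"
  unfolding similar_def using homeos_topspace[of g X x]
  by (intro conjI exI[of _ "topspace X"] exI[of _ g]) (auto simp: homeos_def)

lemma ft1:
  assumes ft: "fully_transitive X" and F: "finite F" "F \<subseteq> topspace X"
    and pq: "p \<notin> F" "q \<notin> F" "similar X p q"
  shows "\<exists>g\<in>homeos X. (\<forall>y\<in>F. g y = y) \<and> g p = q"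
proof -
  obtain xs where xs: "set xs = F" "distinct xs" using finite_distinct_list[OF F(1)] by blast
  have "\<exists>g\<in>homeos X. \<forall>i<length (xs@[p]). g ((xs@[p]) ! i) = (xs@[q]) ! i"
    using ft unfolding fully_transitive_def
  proof (elim allE impE)
    show "length (xs @ [p]) = length (xs @ [q]) \<and> distinct (xs @ [p]) \<and> distinct (xs @ [q]) \<and>
      (\<forall>i<length (xs @ [p]). similar X ((xs @ [p]) ! i) ((xs @ [q]) ! i))"
      using xs pq F(2) by (auto simp: nth_append intro!: similar_refl)
  qed
  then obtain g where g: "g \<in> homeos X" "\<forall>i<length (xs@[p]). g ((xs@[p]) ! i) = (xs@[q]) ! i" by blast
  have "\<forall>y\<in>F. g y = y"
  proof
    fix y assume "y \<in> F"
    then obtain i where "i < length xs" "xs ! i = y" using xs(1) by (auto simp: in_set_conv_nth)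
    then show "g y = y" using g(2)[rule_format, of i] by (auto simp: nth_append)
  qed
  moreover have "g p = q" using g(2)[rule_format, of "length xs"] by simp
  ultimately show ?thesis using g(1) by blast
qed

lemma similar_iff:
  assumes ft: "fully_transitive X"
  shows "similar X x y \<longleftrightarrow> x \<in> topspace X \<and> (\<exists>g\<in>homeos X. g x = y)"
proof
  assume s: "similar X x y"
  then have "x \<in> topspace X" by (simp add: similar_def)
  moreover obtain g where "g \<in> homeos X" "g x = y" using ft1[OF ft, of "{}" x y] s by auto
  ultimately show "x \<in> topspace X \<and> (\<exists>g\<in>homeos X. g x = y)" by blast
next
  assume "x \<in> topspace X \<and> (\<exists>g\<in>homeos X. g x = y)"
  then obtain g where "x \<in> topspace X" "g \<in> homeos X" "g x = y" by blast
  then show "similar X x y" using similar_homeo[of g X x] by simp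
qed

lemma similar_sym:
  assumes ft: "fully_transitive X" and "similar X x y" shows "similar X y x"
proof -
  from assms obtain g where g: "x \<in> topspace X" "g \<in> homeos X" "g x = y" by (auto simp: similar_iff)
  show ?thesis unfolding similar_iff[OF ft]
    using g invG[OF g(2)] homeos_topspace[OF g(2) g(1)] by blast
qed

lemma similar_trans:
  assumes ft: "fully_transitive X" and "similar X x y" "similar X y z" shows "similar X x z"
proof -
  from assms obtain g h where g: "x \<in> topspace X" "g \<in> homeos X" "g x = y" "h \<in> homeos X" "h y = z"
    by (auto simp: similar_iff)
  show ?thesis unfolding similar_iff[OF ft]
    using g homeos_comp[OF g(4) g(2)] by (intro conjI bexI[of _ "h \<circ> g"]) auto
qed

context
  fixes X :: "'a topology" and N :: "('a \<Rightarrow> 'a) set"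
  assumes ft: "fully_transitive X"
    and infc: "\<And>x. x \<in> topspace X \<Longrightarrow> infinite {y. similar X x y}"
    and nor: "N \<lhd> homeo_group X"
begin

lemma N_sub: "n \<in> N \<Longrightarrow> n \<in> homeos X"
  using nor unfolding normal_def subgroup_def by (auto simp: homeo_group_def)

lemma N_mult: "n \<in> N \<Longrightarrow> m \<in> N \<Longrightarrow> n \<circ> m \<in> N"
  using nor unfolding normal_def subgroup_def by (auto simp: homeo_group_def)

lemma N_inv: "n \<in> N \<Longrightarrow> (inv\<^bsub>homeo_group X\<^esub> n) \<in> N"
  using nor unfolding normal_def subgroup_def by (auto simp: homeo_group_def)

lemma N_conj: "h \<in> homeos X \<Longrightarrow> n \<in> N \<Longrightarrow> h \<circ> n \<circ> (inv\<^bsub>homeo_group X\<^esub> h) \<in> N"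
  using normal.inv_op_closed2[OF nor, of h n] by (simp add: homeo_group_def comp_assoc)

definition fixA where "fixA = {x \<in> topspace X. \<forall>g\<in>N. g x = x}"

lemma fresh:
  assumes "x \<in> topspace X" "finite E"
  obtains y where "similar X x y" "y \<notin> E"
proof -
  have "infinite ({y. similar X x y} - E)" using infc[OF assms(1)] assms(2) by simp
  then obtain y where "y \<in> {y. similar X x y} - E" using infinite_imp_nonempty by blast
  then show ?thesis using that by blast
qed

lemma fixA_closed:
  assumes "y \<in> fixA" "similar X y z" shows "z \<in> fixA"
proof -
  obtain h where h: "h \<in> homeos X" "(\<forall>w\<in>{}. h w = w)" "h y = z"
    using ft1[OF ft, of "{}" y z] assms(2) by auto
  have zt: "z \<in> topspace X" using assms(2) by (simp add: similar_def)
  have "g z = z" if g: "g \<in> N" for g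
  proof -
    have "(inv\<^bsub>homeo_group X\<^esub> h) \<in> homeos X" using invG(1)[OF h(1)] .
    then have "(inv\<^bsub>homeo_group X\<^esub> h) \<circ> g \<circ> (inv\<^bsub>homeo_group X\<^esub> (inv\<^bsub>homeo_group X\<^esub> h)) \<in> N"
      using N_conj g by blast
    moreover have "inv\<^bsub>homeo_group X\<^esub> (inv\<^bsub>homeo_group X\<^esub> h) = h"
      using group.inv_inv[OF homeo_group, of h X] h(1) by (simp add: homeo_group_def)
    ultimately have "(inv\<^bsub>homeo_group X\<^esub> h) \<circ> g \<circ> h \<in> N" by simp
    then have "(inv\<^bsub>homeo_group X\<^esub> h) (g (h y)) = y" using assms(1) unfolding fixA_def by auto
    then have "h ((inv\<^bsub>homeo_group X\<^esub> h) (g (h y))) = h y" by simp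
    then show "g z = z" using invG(3)[OF h(1)] h(3) by simp
  qed
  then show ?thesis using zt unfolding fixA_def by blast
qed


abbreviation iv where "iv h \<equiv> inv\<^bsub>homeo_group X\<^esub> h"

lemma move:
  assumes F: "finite F" "F \<subseteq> topspace X"
    and v: "v \<in> topspace X" "v \<notin> fixA" "v \<notin> F"
    and w: "w \<notin> F" "w \<noteq> v" "similar X v w"
  shows "\<exists>k\<in>N. (\<forall>y\<in>F. k y = y) \<and> k v = w"
proof -
  obtain n0 where n0: "n0 \<in> N" "n0 v \<noteq> v" using v unfolding fixA_def by blast
  have n0h: "n0 \<in> homeos X" using N_sub n0(1) .
  define u where "u = n0 v"
  have ut: "u \<in> topspace X" using homeos_topspace[OF n0h v(1)] u_def by simp
  obtain w1 where w1: "similar X u w1" "w1 \<notin> F \<union> {v}" using fresh[OF ut, of "F \<union> {v}"] F by auto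
  obtain h1 where h1: "h1 \<in> homeos X" "\<forall>y\<in>{v}. h1 y = y" "h1 u = w1"
    using ft1[OF ft, of "{v}" u w1] v(1) w1 n0(2) u_def by auto
  define b where "b = h1 \<circ> n0 \<circ> iv h1"
  have bN: "b \<in> N" unfolding b_def using N_conj h1(1) n0(1) by blast
  have bh: "b \<in> homeos X" using N_sub bN .
  have bv: "b v = w1" unfolding b_def using invG_fix[OF h1(1), of v] h1 u_def by simp
  have w1t: "w1 \<in> topspace X" using homeos_topspace[OF bh v(1)] bv by simp
  define E where "E = F \<union> b ` F \<union> {v}"
  have E: "finite E" "E \<subseteq> topspace X" unfolding E_def using F v(1) homeos_topspace[OF bh] by auto
  obtain w2 where w2: "similar X w1 w2" "w2 \<notin> E \<union> {w1}" using fresh[OF w1t, of "E \<union> {w1}"] E by auto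
  have w1E: "w1 \<notin> E"
  proof
    assume "w1 \<in> E"
    moreover have "w1 \<notin> b ` F" using bv v(3) homeos_inj[OF bh] by force
    ultimately show False using w1 unfolding E_def by auto
  qed
  obtain h2 where h2: "h2 \<in> homeos X" "\<forall>y\<in>E. h2 y = y" "h2 w1 = w2"
    using ft1[OF ft E w1E, of w2] w2 by auto
  define k1 where "k1 = iv b \<circ> (h2 \<circ> b \<circ> iv h2)"
  have k1N: "k1 \<in> N" unfolding k1_def using N_conj[OF h2(1) bN] N_inv[OF bN] N_mult by blast
  have k1h: "k1 \<in> homeos X" using N_sub k1N .
  have k1F: "k1 y = y" if "y \<in> F" for y
  proof -
    have "iv h2 y = y" using invG_fix[OF h2(1)] h2(2) that unfolding E_def by blast
    moreover have "h2 (b y) = b y" using h2(2) that unfolding E_def by blast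
    ultimately show ?thesis unfolding k1_def using invG(2)[OF bh] by simp
  qed
  define v' where "v' = k1 v"
  have v'eq: "b v' = w2"
  proof -
    have "iv h2 v = v" using invG_fix[OF h2(1)] h2(2) unfolding E_def by blast
    then show ?thesis unfolding v'_def k1_def using invG(3)[OF bh] bv h2(3) by simp
  qed
  have v'v: "v' \<noteq> v" using v'eq bv w2 by auto
  have v'F: "v' \<notin> F" using v'eq w2 unfolding E_def by auto
  have sv': "similar X v v'" unfolding v'_def using similar_homeo[OF k1h v(1)] .
  have sv'w: "similar X v' w" using similar_trans[OF ft similar_sym[OF ft sv'] w(3)] .
  obtain h3 where h3: "h3 \<in> homeos X" "\<forall>y\<in>F \<union> {v}. h3 y = y" "h3 v' = w"
    using ft1[OF ft, of "F \<union> {v}" v' w] F v v'v v'F w sv'w by auto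
  define k where "k = h3 \<circ> k1 \<circ> iv h3"
  have "k \<in> N" unfolding k_def using N_conj[OF h3(1) k1N] .
  moreover have "\<forall>y\<in>F. k y = y"
    unfolding k_def using invG_fix[OF h3(1)] h3(2) k1F by simp
  moreover have "k v = w"
    unfolding k_def using invG_fix[OF h3(1)] h3 v'_def by simp
  ultimately show ?thesis by blast
qed


lemma fixA_sub: "fixA \<subseteq> topspace X" unfolding fixA_def by blast

lemma N_fix: "N \<subseteq> Fix X fixA"
proof
  fix n assume "n \<in> N"
  then show "n \<in> Fix X fixA" using N_sub unfolding Fix_def fixA_def by blast
qed

lemma extend:
  assumes f: "f \<in> Fix X fixA"
  shows "finite S \<Longrightarrow> S \<subseteq> topspace X \<Longrightarrow> \<exists>g\<in>N. \<forall>x\<in>S. g x = f x"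
proof (induction S rule: finite_induct)
  case empty
  have "id \<in> N" using nor unfolding normal_def subgroup_def by (auto simp: homeo_group_def)
  then show ?case by blast
next
  case (insert x S)
  have fh: "f \<in> homeos X" and fA: "\<forall>a\<in>fixA. f a = a" using f by (auto simp: Fix_def)
  obtain g where g: "g \<in> N" "\<forall>y\<in>S. g y = f y" using insert by auto
  have gh: "g \<in> homeos X" using N_sub g(1) .
  have xt: "x \<in> topspace X" using insert by auto
  show ?case
  proof (cases "x \<in> fixA")
    case True
    then have "g x = f x" using fA g(1) unfolding fixA_def by auto
    then show ?thesis using g by auto
  next
    case xA: False
    show ?thesis
    proof (cases "g x = f x")
      case True then show ?thesis using g by auto
    next
      case ne: False
      have sxv: "similar X x (g x)" using similar_homeo[OF gh xt] .
      have sxf: "similar X x (f x)" using similar_homeo[OF fh xt] .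
      have vA: "g x \<notin> fixA" using fixA_closed[OF _ similar_sym[OF ft sxv]] xA by blast
      have vF: "g x \<notin> g ` S" using insert(2) homeos_inj[OF gh] by force
      have gS: "g ` S = f ` S" using g(2) by auto
      have wF: "f x \<notin> g ` S" unfolding gS using insert(2) homeos_inj[OF fh] by force
      have svw: "similar X (g x) (f x)" using similar_trans[OF ft similar_sym[OF ft sxv] sxf] .
      have Ft: "g ` S \<subseteq> topspace X" using homeos_topspace[OF gh] insert by auto
      obtain k where k: "k \<in> N" "\<forall>y\<in>g ` S. k y = y" "k (g x) = f x"
        using move[of "g ` S" "g x" "f x"] insert(1) Ft homeos_topspace[OF gh xt] vA vF wF ne svw
        by auto
      have "k \<circ> g \<in> N" using N_mult k(1) g(1) by blast
      moreover have "\<forall>y\<in>insert x S. (k \<circ> g) y = f y" using k g(2) by auto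
      ultimately show ?thesis by blast
    qed
  qed
qed

end

theorem proposition18:
  fixes X :: "'a topology" and N :: "('a \<Rightarrow> 'a) set"
  assumes "scattered_space X"
    and "fully_transitive X"
    and "\<And>x. x \<in> topspace X \<Longrightarrow> infinite {y. similar X x y}"
    and "N \<lhd> homeo_group X"
    and "closed_in_homeo X N"
  shows "\<exists>A. A \<subseteq> topspace X \<and> (\<forall>x\<in>A. \<forall>y. similar X x y \<longrightarrow> y \<in> A) \<and> N = Fix X A"
proof (intro exI conjI)
  note ft = assms(2) and infc = assms(3) and nor = assms(4)
  let ?A = "fixA X N"
  show "?A \<subseteq> topspace X" using fixA_sub[OF ft infc nor] .
  show "\<forall>x\<in>?A. \<forall>y. similar X x y \<longrightarrow> y \<in> ?A" using fixA_closed[OF ft infc nor] by blast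
  show "N = Fix X ?A"
  proof
    show "N \<subseteq> Fix X ?A" using N_fix[OF ft infc nor] .
  next
    show "Fix X ?A \<subseteq> N"
    proof
      fix f assume f: "f \<in> Fix X ?A"
      have fh: "f \<in> homeos X" using f by (simp add: Fix_def)
      define P where "P = product_topology (\<lambda>_. X) (topspace X)"
      define H where "H = (\<lambda>h. restrict h (topspace X)) ` homeos X"
      define R where "R = (\<lambda>h. restrict h (topspace X)) ` N"
      have cl: "closedin (subtopology P H) R"
        using assms(5) unfolding closed_in_homeo_def pointwise_top_def P_def H_def R_def by simp
      have HP: "H \<subseteq> topspace P"
      proof
        fix r assume "r \<in> H"
        then obtain h where h: "r = restrict h (topspace X)" "h \<in> homeos X" unfolding H_def by (rule imageE)
        show "r \<in> topspace P" unfolding P_def topspace_product_topology h(1) PiE_iff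
          using homeos_topspace[OF h(2)] by simp
      qed
      have "restrict f (topspace X) \<in> R"
      proof (rule ccontr)
        assume nR: "restrict f (topspace X) \<notin> R"
        have "openin (subtopology P H) (topspace (subtopology P H) - R)"
          using cl closedin_def by blast
        then obtain T where T: "openin P T" "topspace (subtopology P H) - R = T \<inter> H"
          unfolding openin_subtopology by blast
        have fH: "restrict f (topspace X) \<in> H" unfolding H_def using fh by (rule imageI)
        have "restrict f (topspace X) \<in> topspace (subtopology P H) - R"
          using fH HP nR by (simp add: topspace_subtopology subset_iff)
        then have "restrict f (topspace X) \<in> T \<inter> H" unfolding T(2) .
        then have fT: "restrict f (topspace X) \<in> T" by blast
        have "\<forall>x \<in> T. \<exists>U. finite {i \<in> topspace X. U i \<noteq> topspace X} \<and>
                 (\<forall>i \<in> topspace X. openin X (U i)) \<and> x \<in> Pi\<^sub>E (topspace X) U \<and> Pi\<^sub>E (topspace X) U \<subseteq> T"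
          using T(1) unfolding P_def openin_product_topology_alt .
        from bspec[OF this fT] obtain U where U: "finite {i \<in> topspace X. U i \<noteq> topspace X}"
            "\<forall>i \<in> topspace X. openin X (U i)" "restrict f (topspace X) \<in> Pi\<^sub>E (topspace X) U"
            "Pi\<^sub>E (topspace X) U \<subseteq> T"
          by (elim exE conjE) (intro that)
        obtain g where g: "g \<in> N" "\<forall>x\<in>{i \<in> topspace X. U i \<noteq> topspace X}. g x = f x"
          using extend[OF ft infc nor f U(1)] by blast
        have gh: "g \<in> homeos X" using N_sub[OF ft infc nor g(1)] .
        have "restrict g (topspace X) \<in> Pi\<^sub>E (topspace X) U"
        proof (clarsimp simp: PiE_iff)
          fix i assume i: "i \<in> topspace X"
          show "g i \<in> U i"
          proof (cases "U i = topspace X")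
            case True then show ?thesis using homeos_topspace[OF gh i] by simp
          next
            case False then show ?thesis using g(2) i U(3) by (auto simp: PiE_iff)
          qed
        qed
        then have "restrict g (topspace X) \<in> T" using U(4) by blast
        moreover have gH: "restrict g (topspace X) \<in> H" unfolding H_def using gh by (rule imageI)
        ultimately have "restrict g (topspace X) \<in> T \<inter> H" by simp
        then have "restrict g (topspace X) \<in> topspace (subtopology P H) - R" unfolding T(2) .
        then have "restrict g (topspace X) \<notin> R" by simp
        moreover have "restrict g (topspace X) \<in> R" unfolding R_def using g(1) by (rule imageI)
        ultimately show False by blast
      qed
      then obtain g where g0: "restrict f (topspace X) = restrict g (topspace X)" "g \<in> N"
        unfolding R_def by (rule imageE)
      have g: "g \<in> N" "restrict g (topspace X) = restrict f (topspace X)" using g0 by simp_all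
      have gh: "g \<in> homeos X" using N_sub[OF ft infc nor g(1)] .
      have "g = f"
      proof
        fix x show "g x = f x"
        proof (cases "x \<in> topspace X")
          case True then show ?thesis using fun_cong[OF g(2), of x] by simp
        next
          case False then show ?thesis using gh fh by (simp add: homeos_def)
        qed
      qed
      then show "f \<in> N" using g(1) by simp
    qed
  qed
qed

end
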